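(* Suppose $g(S) = \sum_{v \in S} w(v)$ for nonnegative weights $w : V \to \mathbb{R}_{\ge 0}$. For every $\varepsilon > 0$, the algorithm $\mathrm{GIST}(V,g,k,\varepsilon)$ returns a set $S \subseteq V$ with $|S| \le k$ and $$f(S) \ge \left(\tfrac{2}{3} - \varepsilon\right)\cdot \mathrm{OPT}.$$
   Context: Let $V$ be a finite set of $n$ points in a metric space with metric $\mathrm{dist}$, and let $d_{\max} = \max_{u,v \in V}\mathrm{dist}(u,v)$. For $u \in V$ and $S \subseteq V$ let $\mathrm{dist}(u,S) = \min_{v \in S}\mathrm{dist}(u,v)$, with $\mathrm{dist}(u,\emptyset) = \infty$. The max-min diversity is $\mathrm{div}(S) = \min_{u,v \in S,\, u \ne v}\mathrm{dist}(u,v)$ if $|S| \ge 2$, and $\mathrm{div}(S) = d_{\max}$ if $|S| \le 1$. Let $g : 2^V \to \mathbb{R}_{\ge 0}$ be a nonnegative monotone submodular function, let $\lambda \ge 0$, let $k \ge 1$ be an integer, and let $f(S) = g(S) + \lambda\cdot \mathrm{div}(S)$. The MDMS problem is to maximize $f(S)$ subject to $S \subseteq V$, $|S| \le k$; $\mathrm{OPT}$ denotes the optimal value. $\mathrm{GreedyIndependentSet}(V,g,d,k)$: initialize $S \gets \emptyset$; for $i = 1,\dots,k$: let $C = \{v \in V\setminus S : \mathrm{dist}(v,S) \ge d\}$; if $C = \emptyset$ return $S$; otherwise pick $t \in \arg\max_{v \in C} \big(g(S\cup\{v\}) - g(S)\big)$ (ties broken arbitrarily) and set $S \gets S \cup\{t\}$.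 After the loop, return $S$. $\mathrm{GIST}(V,g,k,\varepsilon)$: set $S \gets \mathrm{GreedyIndependentSet}(V,g,0,k)$. Let $T = \{u,v\}$ be two points with $\mathrm{dist}(u,v) = d_{\max}$; if $f(T) > f(S)$ and $k \ge 2$, set $S \gets T$. Let $D = \{(1+\varepsilon)^i \cdot \varepsilon d_{\max}/2 : i \in \mathbb{Z}_{\ge 0},\ (1+\varepsilon)^i \le 2/\varepsilon\}$. For each $d \in D$: set $T \gets \mathrm{GreedyIndependentSet}(V,g,d,k)$ and if $f(T) \ge f(S)$ set $S \gets T$. Return $S$. *)

theory Defs
  imports "HOL-Analysis.Analysis"
begin

definition dmax :: "'a set \<Rightarrow> ('a \<Rightarrow> 'a \<Rightarrow> real) \<Rightarrow> real" where
  "dmax V d = Max {d u v | u v. u \<in> V \<and> v \<in> V}"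

definition divers :: "'a set \<Rightarrow> ('a \<Rightarrow> 'a \<Rightarrow> real) \<Rightarrow> 'a set \<Rightarrow> real" where
  "divers V d S = (if card S \<ge> 2 then Min {d u v | u v. u \<in> S \<and> v \<in> S \<and> u \<noteq> v}
                   else dmax V d)"

definition fobj :: "'a set \<Rightarrow> ('a \<Rightarrow> 'a \<Rightarrow> real) \<Rightarrow> ('a set \<Rightarrow> real) \<Rightarrow> real \<Rightarrow> 'a set \<Rightarrow> real" where
  "fobj V d g lam S = g S + lam * divers V d S"

definition OPT :: "'a set \<Rightarrow> ('a \<Rightarrow> 'a \<Rightarrow> real) \<Rightarrow> ('a set \<Rightarrow> real) \<Rightarrow> real \<Rightarrow> nat \<Rightarrow> real" where
  "OPT V d g lam k = Max {fobj V d g lam S | S. S \<subseteq> V \<and> card S \<le> k}"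

definition cand :: "'a set \<Rightarrow> ('a \<Rightarrow> 'a \<Rightarrow> real) \<Rightarrow> real \<Rightarrow> 'a set \<Rightarrow> 'a set" where
  "cand V d thr S = {v \<in> V - S. \<forall>u\<in>S. thr \<le> d v u}"

text \<open>States reachable after i iterations of the loop of GreedyIndependentSet
  (any tie-breaking), without having returned early.\<close>
inductive gis_reach :: "'a set \<Rightarrow> ('a \<Rightarrow> 'a \<Rightarrow> real) \<Rightarrow> ('a set \<Rightarrow> real) \<Rightarrow> real \<Rightarrow> nat
    \<Rightarrow> nat \<Rightarrow> 'a set \<Rightarrow> bool"
  for V d g thr k where
  start: "gis_reach V d g thr k 0 {}"
| step: "\<lbrakk> gis_reach V d g thr k i S; i < k; t \<in> cand V d thr S;
           \<forall>v \<in> cand V d thr S. g (insert v S) - g S \<le> g (insert t S) - g S \<rbrakk>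
         \<Longrightarrow> gis_reach V d g thr k (Suc i) (insert t S)"

definition gis_out :: "'a set \<Rightarrow> ('a \<Rightarrow> 'a \<Rightarrow> real) \<Rightarrow> ('a set \<Rightarrow> real) \<Rightarrow> real \<Rightarrow> nat
    \<Rightarrow> 'a set \<Rightarrow> bool" where
  "gis_out V d g thr k S \<longleftrightarrow>
     gis_reach V d g thr k k S \<or> (\<exists>i<k. gis_reach V d g thr k i S \<and> cand V d thr S = {})"

definition thresholds :: "'a set \<Rightarrow> ('a \<Rightarrow> 'a \<Rightarrow> real) \<Rightarrow> real \<Rightarrow> real set" where
  "thresholds V d eps = {(1 + eps) ^ i * eps * dmax V d / 2 | i::nat. (1 + eps) ^ i \<le> 2 / eps}"

text \<open>The loop over D (in increasing order): current set S, remaining thresholds, final set.\<close>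
inductive gist_loop :: "'a set \<Rightarrow> ('a \<Rightarrow> 'a \<Rightarrow> real) \<Rightarrow> ('a set \<Rightarrow> real) \<Rightarrow> real \<Rightarrow> nat
    \<Rightarrow> 'a set \<Rightarrow> real list \<Rightarrow> 'a set \<Rightarrow> bool"
  for V d g lam k where
  nil: "gist_loop V d g lam k S [] S"
| cons: "\<lbrakk> gis_out V d g thr k T;
           gist_loop V d g lam k
             (if fobj V d g lam T \<ge> fobj V d g lam S then T else S) ds R \<rbrakk>
         \<Longrightarrow> gist_loop V d g lam k S (thr # ds) R"

text \<open>Possible outputs of GIST(V,g,k,eps) (over all tie-breaking choices and
  all choices of the diametral pair).\<close>
definition gist_out :: "'a set \<Rightarrow> ('a \<Rightarrow> 'a \<Rightarrow> real) \<Rightarrow> ('a set \<Rightarrow> real) \<Rightarrow> real \<Rightarrow> nat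
    \<Rightarrow> real \<Rightarrow> 'a set \<Rightarrow> bool" where
  "gist_out V d g lam k eps R \<longleftrightarrow>
     (\<exists>S0 u v. gis_out V d g 0 k S0 \<and> u \<in> V \<and> v \<in> V \<and> d u v = dmax V d \<and>
        gist_loop V d g lam k
          (if fobj V d g lam {u, v} > fobj V d g lam S0 \<and> k \<ge> 2 then {u, v} else S0)
          (sorted_list_of_set (thresholds V d eps)) R)"

end

theory Submission
  imports Defs
begin

lemma reach_basic:
  "gis_reach V d g thr k i S \<Longrightarrow> S \<subseteq> V \<and> finite S \<and> card S = i \<and> i \<le> k"
  by (induction rule: gis_reach.induct) (auto simp: cand_def)

lemma out_basic:
  "gis_out V d g thr k S \<Longrightarrow> S \<subseteq> V \<and> card S \<le> k"
  unfolding gis_out_def using reach_basic by fastforce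

lemma reach_sep:
  assumes "gis_reach V d g thr k i S" "Metric_space V d"
  shows "\<forall>u\<in>S. \<forall>v\<in>S. u \<noteq> v \<longrightarrow> thr \<le> d u v"
  using assms
proof (induction rule: gis_reach.induct)
  case start then show ?case by simp
next
  case (step i S t)
  have "\<forall>u\<in>S. thr \<le> d t u" using step.hyps(3) by (auto simp: cand_def)
  moreover have "\<forall>u\<in>S. thr \<le> d u t"
    using calculation Metric_space.commute[OF step.prems] by metis
  ultimately show ?case using step.IH[OF step.prems] by auto
qed

lemma loop_prop:
  "gist_loop V d g lam k S ds R \<Longrightarrow> fobj V d g lam S \<le> fobj V d g lam R \<and>
    (\<forall>thr\<in>set ds. \<exists>T. gis_out V d g thr k T \<and> fobj V d g lam T \<le> fobj V d g lam R) \<and>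
    (R = S \<or> (\<exists>thr\<in>set ds. gis_out V d g thr k R))"
proof (induction rule: gist_loop.induct)
  case (nil S)
  then show ?case by simp
next
  case (cons thr T S ds R)
  show ?case
  proof (cases "fobj V d g lam T \<ge> fobj V d g lam S")
    case True
    then show ?thesis using cons by auto
  next
    case False
    then show ?thesis using cons by auto
  qed
qed

lemma pow_finite:
  assumes "(eps::real) > 0"
  shows "finite {i::nat. (1+eps)^i \<le> r}"
proof (rule finite_subset)
  show "{i::nat. (1+eps)^i \<le> r} \<subseteq> {..nat \<lceil>r/eps\<rceil>}"
  proof
    fix i assume "i \<in> {i::nat. (1+eps)^i \<le> r}"
    hence "(1+eps)^i \<le> r" by simp
    moreover have "1 + real i * eps \<le> (1+eps)^i" using Bernoulli_inequality[of eps i] assms by simp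
    ultimately have "real i * eps \<le> r" by linarith
    hence "real i \<le> r / eps" using assms by (simp add: field_simps)
    hence "real i \<le> \<lceil>r/eps\<rceil>" by linarith
    hence "int i \<le> \<lceil>r/eps\<rceil>" by (metis of_int_le_iff of_int_of_nat_eq)
    thus "i \<in> {..nat \<lceil>r/eps\<rceil>}" by simp
  qed
qed simp

definition Bl :: "'a set \<Rightarrow> ('a \<Rightarrow> 'a \<Rightarrow> real) \<Rightarrow> real \<Rightarrow> 'a set \<Rightarrow> 'a set" where
  "Bl Q d thr S = {x\<in>Q. \<exists>t\<in>S. x = t \<or> d x t < thr}"

lemma reach_inv:
  assumes "gis_reach V d (\<lambda>X. sum w X) thr k i S" "Q \<subseteq> V" "Metric_space V d" "0 \<le> thr"
    "\<forall>x1\<in>Q. \<forall>x2\<in>Q. x1 \<noteq> x2 \<longrightarrow> 2*thr \<le> d x1 x2"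
  shows "\<exists>\<phi>. inj_on \<phi> (Bl Q d thr S) \<and> \<phi> ` Bl Q d thr S \<subseteq> S \<and>
     (\<forall>x\<in>Bl Q d thr S. w x \<le> w (\<phi> x)) \<and> (\<forall>x\<in>Q - Bl Q d thr S. \<forall>u\<in>S. w x \<le> w u)"
  using assms(1)
proof (induction rule: gis_reach.induct)
  case start
  then show ?case by (auto simp: Bl_def)
next
  case (step i S t)
  obtain \<phi> where phi: "inj_on \<phi> (Bl Q d thr S)" "\<phi> ` Bl Q d thr S \<subseteq> S"
     "\<forall>x\<in>Bl Q d thr S. w x \<le> w (\<phi> x)" "\<forall>x\<in>Q - Bl Q d thr S. \<forall>u\<in>S. w x \<le> w u"
    using step.IH by blast
  have SV: "S \<subseteq> V" "finite S" using reach_basic[OF step.hyps(1)] by auto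
  have tV: "t \<in> V" "t \<notin> S" using step.hyps(3) by (auto simp: cand_def)
  have gain: "w v \<le> w t" if "v \<in> cand V d thr S" for v
  proof -
    have "v \<notin> S" using that by (auto simp: cand_def)
    then show ?thesis using step.hyps(4) that tV SV by auto
  qed
  have unbl: "x \<in> cand V d thr S" if "x \<in> Q - Bl Q d thr S" for x
    using that assms(2) by (auto simp: Bl_def cand_def)
  define N where "N = {x\<in>Q. x = t \<or> d x t < thr}"
  have Bins: "Bl Q d thr (insert t S) = Bl Q d thr S \<union> N"
    by (auto simp: Bl_def N_def)
  have Nuniq: "x1 = x2" if "x1 \<in> N" "x2 \<in> N" for x1 x2
  proof (rule ccontr)
    assume ne: "x1 \<noteq> x2"
    have x12: "x1 \<in> V" "x2 \<in> V" "x1 \<in> Q" "x2 \<in> Q" using that assms(2) by (auto simp: N_def)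
    have big: "2*thr \<le> d x1 x2" using assms(5) x12 ne by blast
    have tri: "d x1 x2 \<le> d x1 t + d t x2" using Metric_space.triangle[OF assms(3) x12(1) tV(1) x12(2)] .
    have cm: "d t x2 = d x2 t" "d x1 x2 = d x2 x1" "d t x1 = d x1 t"
      using Metric_space.commute[OF assms(3)] by metis+
    show False
    proof (cases "x1 = t")
      case True
      hence "d x2 t < thr" using that ne by (auto simp: N_def)
      then show ?thesis using big True cm assms(4) by auto
    next
      case False
      hence a: "d x1 t < thr" using that by (auto simp: N_def)
      show ?thesis
      proof (cases "x2 = t")
        case True
        then show ?thesis using a big cm assms(4) by auto
      next
        case False
        hence "d x2 t < thr" using that by (auto simp: N_def)
        then show ?thesis using a big tri cm by linarith
      qed
    qed
  qed
  show ?case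
  proof (cases "N \<subseteq> Bl Q d thr S")
    case True
    hence eq: "Bl Q d thr (insert t S) = Bl Q d thr S" using Bins by auto
    show ?thesis
      apply (rule exI[of _ \<phi>])
      using phi gain unbl unfolding eq by auto
  next
    case False
    then obtain x0 where x0: "x0 \<in> N" "x0 \<notin> Bl Q d thr S" by auto
    have Nsub: "N \<subseteq> insert x0 (Bl Q d thr S)" using Nuniq x0(1) by auto
    have eq: "Bl Q d thr (insert t S) = insert x0 (Bl Q d thr S)" using Bins Nsub x0 by auto
    have o0O: "x0 \<in> Q - Bl Q d thr S" using x0 by (auto simp: N_def)
    have wo0: "w x0 \<le> w t" using gain unbl o0O by blast
    define \<psi> where "\<psi> = \<phi>(x0 := t)"
    have "inj_on \<psi> (insert x0 (Bl Q d thr S))"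
      using phi(1,2) x0(2) tV(2) unfolding \<psi>_def
      by (auto simp: inj_on_def)
    moreover have "\<psi> ` insert x0 (Bl Q d thr S) \<subseteq> insert t S"
      using phi(2) x0(2) unfolding \<psi>_def by auto
    moreover have "\<forall>x\<in>insert x0 (Bl Q d thr S). w x \<le> w (\<psi> x)"
      using phi(3) x0(2) wo0 unfolding \<psi>_def by auto
    moreover have "\<forall>x\<in>Q - insert x0 (Bl Q d thr S). \<forall>u\<in>insert t S. w x \<le> w u"
      using phi(4) gain unbl by auto
    ultimately show ?thesis unfolding eq by blast
  qed
qed

lemma out_weight:
  assumes out: "gis_out V d (\<lambda>X. sum w X) thr k T" and QV: "Q \<subseteq> V" "finite V" "card Q \<le> k"
    and ms: "Metric_space V d" and th: "0 \<le> thr"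
    and sep: "\<forall>x1\<in>Q. \<forall>x2\<in>Q. x1 \<noteq> x2 \<longrightarrow> 2*thr \<le> d x1 x2"
    and wn: "\<forall>v\<in>V. w v \<ge> 0"
  shows "sum w Q \<le> sum w T"
proof -
  obtain i where reach: "gis_reach V d (\<lambda>X. sum w X) thr k i T"
    and cases: "card T = k \<or> cand V d thr T = {}"
    using out reach_basic unfolding gis_out_def by blast
  have TV: "T \<subseteq> V" "finite T" "card T \<le> k" using reach_basic[OF reach] by auto
  have fQ: "finite Q" using QV finite_subset by blast
  define B where "B = Bl Q d thr T"
  have BQ: "B \<subseteq> Q" by (auto simp: B_def Bl_def)
  obtain \<phi> where phi: "inj_on \<phi> B" "\<phi> ` B \<subseteq> T"
     "\<forall>x\<in>B. w x \<le> w (\<phi> x)" "\<forall>x\<in>Q - B. \<forall>u\<in>T. w x \<le> w u"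
    using reach_inv[OF reach QV(1) ms th sep] unfolding B_def by blast
  have fB: "finite B" using BQ fQ finite_subset by blast
  have cardle: "card (Q - B) \<le> card (T - \<phi> ` B)"
    using cases
  proof
    assume cT: "card T = k"
    have "card (T - \<phi> ` B) = card T - card B"
      using card_Diff_subset[OF finite_imageI[OF fB] phi(2)] card_image[OF phi(1)] by simp
    moreover have "card (Q - B) = card Q - card B" using card_Diff_subset[OF fB BQ] .
    ultimately show ?thesis using cT QV(3) diff_le_mono by metis
  next
    assume ce: "cand V d thr T = {}"
    have "Q - B = {}"
    proof (rule ccontr)
      assume "Q - B \<noteq> {}"
      then obtain x where "x \<in> Q" "x \<notin> B" by auto
      then have "x \<in> cand V d thr T" using QV(1) by (auto simp: B_def Bl_def cand_def)
      then show False using ce by simp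
    qed
    then show ?thesis by (metis card.empty le0)
  qed
  obtain \<psi> where psi: "\<psi> ` (Q - B) \<subseteq> T - \<phi> ` B" "inj_on \<psi> (Q - B)"
    using card_le_inj[OF _ _ cardle] fQ TV(2) by blast
  have "sum w Q = sum w B + sum w (Q - B)"
    using sum.subset_diff[OF BQ fQ] by (simp add: add.commute)
  also have "sum w B \<le> sum (w \<circ> \<phi>) B" using phi(3) by (intro sum_mono) auto
  also have "sum (w \<circ> \<phi>) B = sum w (\<phi> ` B)" by (simp add: sum.reindex[OF phi(1)])
  also have "sum w (Q - B) \<le> sum (w \<circ> \<psi>) (Q - B)"
    using phi(4) psi(1) by (intro sum_mono) auto
  also have "sum (w \<circ> \<psi>) (Q - B) = sum w (\<psi> ` (Q - B))" by (simp add: sum.reindex[OF psi(2)])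
  also have "sum w (\<phi> ` B) + sum w (\<psi> ` (Q - B)) = sum w (\<phi> ` B \<union> \<psi> ` (Q - B))"
    using psi(1) fB fQ by (intro sum.union_disjoint[symmetric]) auto
  also have "\<dots> \<le> sum w T"
    using phi(2) psi(1) TV wn by (intro sum_mono2) auto
  finally show ?thesis by simp
qed

lemma arith1:
  fixes A B x fS eps :: real
  assumes "A \<ge> 0" "B \<ge> 0" "x \<ge> 0" "fS \<ge> A + x" "fS \<ge> B" "2*x*(1+eps) \<ge> B"
    "0 < eps" "eps \<le> 2/3"
  shows "(2/3 - eps) * (A + B) \<le> fS"
proof -
  have "B*(1-eps) \<le> 2*x*(1+eps)*(1-eps)" using assms by (intro mult_right_mono) auto
  also have "\<dots> = 2*x - 2*x*eps^2" by (simp add: algebra_simps power2_eq_square)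
  also have "\<dots> \<le> 2*x" using assms by simp
  finally have h: "B*(1-eps) \<le> 2*x" .
  have e1: "(2/3 - eps) * (A + B) = 2/3*A + 2/3*B - eps*A - eps*B" by (simp add: algebra_simps)
  have h2: "B - eps*B \<le> 2*x" using h by (simp add: algebra_simps)
  have e3: "eps*A \<ge> 0" "eps*B \<ge> 0" using assms by simp_all
  show ?thesis using e1 e3 h2 assms(4,5) by linarith
qed

lemma arith2:
  fixes A ds lam dm fS eps :: real
  assumes "A \<ge> 0" "ds \<ge> 0" "lam \<ge> 0" "fS \<ge> A" "fS \<ge> lam * dm" "ds < eps * dm" "0 < eps"
  shows "(2/3 - eps) * (A + lam*ds) \<le> fS"
proof -
  have "lam*ds \<le> lam*(eps*dm)" using assms by (intro mult_left_mono) auto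
  also have "\<dots> = eps*(lam*dm)" by simp
  also have "\<dots> \<le> eps*fS" using assms by (intro mult_left_mono) auto
  finally have h: "A + lam*ds \<le> (1+eps)*fS" using assms by (simp add: algebra_simps)
  have pos: "0 \<le> A + lam*ds" using assms by simp
  show ?thesis
  proof (cases "2/3 - eps \<le> 0")
    case True
    then have "(2/3 - eps) * (A + lam*ds) \<le> 0" using pos mult_nonpos_nonneg by blast
    then show ?thesis using assms by linarith
  next
    case False
    then have "(2/3 - eps) * (A + lam*ds) \<le> (2/3 - eps) * ((1+eps)*fS)"
      using h by (intro mult_left_mono) auto
    also have "\<dots> = (2/3 - eps/3 - eps^2) * fS" by (simp add: algebra_simps power2_eq_square)
    also have "\<dots> \<le> 1 * fS"
    proof (rule mult_right_mono)
      have "eps^2 \<ge> 0" by simp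
      then show "2/3 - eps/3 - eps^2 \<le> 1" using assms by linarith
      show "0 \<le> fS" using assms by linarith
    qed
    finally show ?thesis by simp
  qed
qed

lemma dmax_ge:
  assumes "finite V" "u \<in> V" "v \<in> V"
  shows "d u v \<le> dmax V d"
proof -
  have "{d u v | u v. u \<in> V \<and> v \<in> V} = (\<lambda>(u,v). d u v) ` (V \<times> V)" by auto
  then have "finite {d u v | u v. u \<in> V \<and> v \<in> V}" using assms by simp
  then show ?thesis unfolding dmax_def using assms by (intro Max_ge) auto
qed

lemma two_elems:
  assumes "card S \<ge> 2"
  shows "\<exists>u v. u \<in> S \<and> v \<in> S \<and> u \<noteq> v"
proof -
  have "Suc 1 \<le> card S" using assms by simp
  then obtain a B where aB: "S = insert a B" "a \<notin> B" "1 \<le> card B" "finite B"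
    unfolding card_le_Suc_iff by blast
  then have "B \<noteq> {}" by (metis card.empty not_one_le_zero)
  then obtain b where "b \<in> B" by blast
  then show ?thesis using aB by blast
qed

lemma pairs_finite:
  assumes "finite S"
  shows "finite {d u v | u v. u \<in> S \<and> v \<in> S \<and> u \<noteq> v}"
proof -
  have "{d u v | u v. u \<in> S \<and> v \<in> S \<and> u \<noteq> v} \<subseteq> (\<lambda>(u,v). d u v) ` (S \<times> S)"
  proof
    fix x assume "x \<in> {d u v | u v. u \<in> S \<and> v \<in> S \<and> u \<noteq> v}"
    then obtain u v where xe: "x = d u v" and uv: "u \<in> S" "v \<in> S" by blast
    from uv have "(u,v) \<in> S \<times> S" by simp
    then have "(\<lambda>(u,v). d u v) (u,v) \<in> (\<lambda>(u,v). d u v) ` (S \<times> S)" by (rule imageI)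
    then show "x \<in> (\<lambda>(u,v). d u v) ` (S \<times> S)" using xe by simp
  qed
  then show ?thesis by (rule finite_subset) (simp add: assms)
qed

lemma divers_ge:
  assumes "finite S" "\<forall>u\<in>S. \<forall>v\<in>S. u \<noteq> v \<longrightarrow> c \<le> d u v" "c \<le> dmax V d"
  shows "c \<le> divers V d S"
proof (cases "card S \<ge> 2")
  case True
  define P where "P = {d u v | u v. u \<in> S \<and> v \<in> S \<and> u \<noteq> v}"
  obtain u v where "u \<in> S" "v \<in> S" "u \<noteq> v" using two_elems[OF True] by blast
  then have ne: "P \<noteq> {}" unfolding P_def by blast
  have fin: "finite P" unfolding P_def by (rule pairs_finite[OF assms(1)])
  have eq: "divers V d S = Min P" using True unfolding divers_def P_def by simp
  have all: "\<forall>x\<in>P. c \<le> x" unfolding P_def using assms(2) by blast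
  show ?thesis unfolding eq using Min.boundedI[OF fin ne] all by blast
next
  case False
  then show ?thesis unfolding divers_def using assms by simp
qed

lemma divers_le:
  assumes "finite S" "u \<in> S" "v \<in> S" "u \<noteq> v"
  shows "divers V d S \<le> d u v"
proof -
  have "card S \<ge> 2"
  proof -
    have "{u,v} \<subseteq> S" using assms by auto
    then have "card {u,v} \<le> card S" using assms card_mono by blast
    then show ?thesis using assms by simp
  qed
  define P where "P = {d u v | u v. u \<in> S \<and> v \<in> S \<and> u \<noteq> v}"
  have fin: "finite P" unfolding P_def by (rule pairs_finite[OF assms(1)])
  have eq: "divers V d S = Min P" using \<open>card S \<ge> 2\<close> unfolding divers_def P_def by simp
  have "d u v \<in> P" unfolding P_def using assms by blast
  then show ?thesis unfolding eq using Min_le[OF fin] by blast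
qed

theorem theorem3p3:
  fixes V :: "'a set" and d :: "'a \<Rightarrow> 'a \<Rightarrow> real" and w :: "'a \<Rightarrow> real"
    and lam :: real and k :: nat and eps :: real and S :: "'a set"
  assumes "finite V" and "V \<noteq> {}"
    and "Metric_space V d"
    and "\<forall>v\<in>V. w v \<ge> 0"
    and "lam \<ge> 0" and "k \<ge> 1" and "eps > 0"
    and "gist_out V d (\<lambda>X. \<Sum>v\<in>X. w v) lam k eps S"
  shows "S \<subseteq> V \<and> card S \<le> k \<and>
         fobj V d (\<lambda>X. \<Sum>v\<in>X. w v) lam S \<ge> (2/3 - eps) * OPT V d (\<lambda>X. \<Sum>v\<in>X. w v) lam k"
proof -
  note finV = assms(1) and ms = assms(3) and wn = assms(4) and lam0 = assms(5)
  define g where "g = (\<lambda>X. \<Sum>v\<in>X. w v)"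
  define f where "f = fobj V d g lam"
  have fdef: "f X = sum w X + lam * divers V d X" for X by (simp add: f_def fobj_def g_def)
  obtain S0 u v where S0: "gis_out V d g 0 k S0" and uv: "u \<in> V" "v \<in> V" "d u v = dmax V d"
    and loop: "gist_loop V d g lam k
          (if f {u, v} > f S0 \<and> k \<ge> 2 then {u, v} else S0)
          (sorted_list_of_set (thresholds V d eps)) S"
    using assms(8) unfolding gist_out_def g_def[symmetric] f_def[symmetric] by blast
  define X0 where "X0 = (if f {u, v} > f S0 \<and> k \<ge> 2 then {u, v} else S0)"
  have finth: "finite (thresholds V d eps)"
  proof -
    have "thresholds V d eps = (\<lambda>i. (1 + eps) ^ i * eps * dmax V d / 2) ` {i. (1+eps)^i \<le> 2/eps}"
      by (auto simp: thresholds_def)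
    then show ?thesis using pow_finite[OF assms(7)] by simp
  qed
  have setL: "set (sorted_list_of_set (thresholds V d eps)) = thresholds V d eps"
    using finth by simp
  have LP: "f X0 \<le> f S"
    "\<forall>thr\<in>thresholds V d eps. \<exists>T. gis_out V d g thr k T \<and> f T \<le> f S"
    "S = X0 \<or> (\<exists>thr. gis_out V d g thr k S)"
    using loop_prop[OF loop[folded X0_def]] unfolding setL f_def by blast+
  have S0b: "S0 \<subseteq> V" "card S0 \<le> k" using out_basic[OF S0] by auto
  have X0b: "X0 \<subseteq> V \<and> card X0 \<le> k"
  proof (cases "f {u, v} > f S0 \<and> k \<ge> 2")
    case True
    have "card {u,v} \<le> 2" by (simp add: card_insert_if)
    then show ?thesis using True uv unfolding X0_def by auto
  next
    case False
    then show ?thesis using S0b unfolding X0_def by auto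
  qed
  have part1: "S \<subseteq> V \<and> card S \<le> k" using LP(3) X0b out_basic by blast
  have fS0X0: "f S0 \<le> f X0" unfolding X0_def by auto
  have fuvX0: "k \<ge> 2 \<Longrightarrow> f {u,v} \<le> f X0" unfolding X0_def by auto
  have dmax0: "0 \<le> dmax V d" using dmax_ge[OF finV uv(1) uv(1), of d] Metric_space.nonneg[OF ms, of u u] by linarith
  have divnn: "0 \<le> divers V d X" if "finite X" for X
  proof (rule divers_ge[OF that _ dmax0])
    show "\<forall>u\<in>X. \<forall>v\<in>X. u \<noteq> v \<longrightarrow> 0 \<le> d u v" using Metric_space.nonneg[OF ms] by blast
  qed
  have fnn: "0 \<le> f X" if "X \<subseteq> V" for X
  proof -
    have fX: "finite X" using that finV by (rule finite_subset)
    have "0 \<le> sum w X" using that wn by (intro sum_nonneg) (auto simp: subset_iff)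
    moreover have "0 \<le> lam * divers V d X" by (rule mult_nonneg_nonneg[OF lam0 divnn[OF fX]])
    ultimately show ?thesis using fdef[of X] by linarith
  qed
  define FS where "FS = f ` {X. X \<subseteq> V \<and> card X \<le> k}"
  have finFS: "finite FS"
  proof -
    have "{X. X \<subseteq> V \<and> card X \<le> k} \<subseteq> Pow V" by blast
    then have "finite {X. X \<subseteq> V \<and> card X \<le> k}" using finV by (meson finite_Pow_iff finite_subset)
    then show ?thesis unfolding FS_def by (rule finite_imageI)
  qed
  have "{} \<in> {X. X \<subseteq> V \<and> card X \<le> k}" by simp
  then have neFS: "FS \<noteq> {}" unfolding FS_def by blast
  have OPTeq: "OPT V d g lam k = Max FS"
  proof -
    have "{fobj V d g lam S | S. S \<subseteq> V \<and> card S \<le> k} = FS" unfolding FS_def f_def by blast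
    then show ?thesis unfolding OPT_def by simp
  qed
  obtain O' where O'0: "O' \<in> {X. X \<subseteq> V \<and> card X \<le> k}" and O'1: "Max FS = f O'"
    using Max_in[OF finFS neFS] unfolding FS_def by blast
  have O': "O' \<subseteq> V" "card O' \<le> k" "OPT V d g lam k = f O'"
    using O'0 O'1 OPTeq by auto
  have finO: "finite O'" using O'(1) finV finite_subset by blast
  define A where "A = sum w O'"
  define ds where "ds = divers V d O'"
  have A0: "0 \<le> A" unfolding A_def using O'(1) wn by (intro sum_nonneg) auto
  have ds0: "0 \<le> ds" unfolding ds_def using divnn finO by blast
  have OPTA: "OPT V d g lam k = A + lam * ds" using O'(3) fdef A_def ds_def by simp
  have dsle: "ds \<le> dmax V d"
  proof (cases "card O' \<ge> 2")
    case True
    obtain a b where "a \<in> O'" "b \<in> O'" "a \<noteq> b" using two_elems[OF True] by blast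
    then have "ds \<le> d a b" unfolding ds_def using divers_le[OF finO] by blast
    also have "d a b \<le> dmax V d" using dmax_ge[OF finV] \<open>a \<in> O'\<close> \<open>b \<in> O'\<close> O'(1) by blast
    finally show ?thesis .
  next
    case False
    then show ?thesis by (simp add: ds_def divers_def)
  qed
  have sep0: "\<forall>x1\<in>O'. \<forall>x2\<in>O'. x1 \<noteq> x2 \<longrightarrow> 2*0 \<le> d x1 x2"
    using Metric_space.nonneg[OF ms] by simp
  have ASO: "A \<le> sum w S0"
    unfolding A_def
    using out_weight[OF S0[unfolded g_def] O'(1) finV O'(2) ms order_refl sep0 wn] .
  have finS0: "finite S0" using finite_subset[OF S0b(1) finV] .
  have AfS: "A \<le> f S"
  proof -
    have "0 \<le> lam * divers V d S0" by (rule mult_nonneg_nonneg[OF lam0 divnn[OF finS0]])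
    then show ?thesis using ASO fdef[of S0] fS0X0 LP(1) by linarith
  qed
  have OPT0: "0 \<le> OPT V d g lam k" using O' fnn by simp
  have goal2: "(2/3 - eps) * OPT V d g lam k \<le> f S"
  proof (cases "k = 1")
    case True
    have "\<not> card O' \<ge> 2" "\<not> card S0 \<ge> 2" using O'(2) S0b(2) True by auto
    then have "ds = dmax V d" "divers V d S0 = dmax V d" by (auto simp: ds_def divers_def)
    then have "lam * ds = lam * divers V d S0" by simp
    then have "OPT V d g lam k \<le> f S"
      using OPTA ASO fdef[of S0] fS0X0 LP(1) by linarith
    moreover have "(2/3 - eps) * OPT V d g lam k \<le> OPT V d g lam k"
      using mult_right_mono[OF _ OPT0, of "2/3 - eps" 1] assms(7) by simp
    ultimately show ?thesis by linarith
  next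
    case False
    then have k2: "k \<ge> 2" using assms(6) by simp
    have dvu: "d v u = dmax V d" using uv(3) Metric_space.commute[OF ms, of u v] by simp
    have "dmax V d \<le> divers V d {u,v}"
    proof (rule divers_ge)
      show "\<forall>a\<in>{u,v}. \<forall>b\<in>{u,v}. a \<noteq> b \<longrightarrow> dmax V d \<le> d a b"
        using uv(3) dvu by auto
    qed auto
    then have m1: "lam * dmax V d \<le> lam * divers V d {u,v}" by (rule mult_left_mono[OF _ lam0])
    have "0 \<le> sum w {u,v}" using uv wn by (intro sum_nonneg) auto
    then have "lam * dmax V d \<le> f {u,v}" using fdef[of "{u,v}"] m1 by linarith
    then have BfS: "lam * dmax V d \<le> f S" using fuvX0[OF k2] LP(1) by linarith
    show ?thesis
    proof (cases "eps \<le> 2/3")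
      case False
      then have "2/3 - eps \<le> 0" by simp
      then have "(2/3 - eps) * OPT V d g lam k \<le> 0" using mult_nonpos_nonneg[OF _ OPT0] by blast
      then show ?thesis using AfS A0 by linarith
    next
      case epsle: True
      show ?thesis
      proof (cases "ds < eps * dmax V d")
        case True
        show ?thesis unfolding OPTA
          using arith2[OF A0 ds0 lam0 AfS BfS True assms(7)] .
      next
        case False
        then have dsge: "eps * dmax V d \<le> ds" by simp
        have e2: "1/eps \<le> 2/eps" by (rule divide_right_mono) (use assms(7) in auto)
        obtain thr where thr: "thr \<in> thresholds V d eps" "0 \<le> thr" "2*thr \<le> ds" "ds \<le> 2*thr*(1+eps)"
        proof (cases "dmax V d = 0")
          case True
          then have ds00: "ds = 0" using dsle ds0 by simp
          have "1 \<le> 2/eps" using epsle assms(7) by (simp add: le_divide_eq)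
          then have c1: "(1+eps)^0 \<le> 2/eps" by simp
          have c2: "(0::real) = (1+eps)^0 * eps * dmax V d / 2" using True by simp
          have "(0::real) \<in> thresholds V d eps"
            unfolding thresholds_def using c1 c2 by blast
          then show ?thesis using that ds00 by simp
        next
          case False
          then have dpos: "0 < dmax V d" using dmax0 by simp
          define r where "r = ds / (eps * dmax V d)"
          have edpos: "0 < eps * dmax V d" using dpos assms(7) by simp
          have r1: "1 \<le> r" unfolding r_def using dsge edpos by (simp add: le_divide_eq)
          have rle: "r \<le> 1/eps"
          proof -
            have "ds / (eps * dmax V d) \<le> dmax V d / (eps * dmax V d)"
              by (rule divide_right_mono[OF dsle]) (use edpos in simp)
            also have "dmax V d / (eps * dmax V d) = 1/eps" using dpos by simp
            finally show ?thesis unfolding r_def .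
          qed
          define I where "I = {i::nat. (1+eps)^i \<le> r}"
          have finI: "finite I" unfolding I_def using pow_finite[OF assms(7)] .
          have "0 \<in> I" unfolding I_def using r1 by simp
          then have neI: "I \<noteq> {}" by blast
          define i where "i = Max I"
          have "i \<in> I" unfolding i_def by (rule Max_in[OF finI neI])
          then have iI: "(1+eps)^i \<le> r" unfolding I_def by simp
          have "Suc i \<notin> I"
          proof
            assume "Suc i \<in> I"
            then have "Suc i \<le> i" unfolding i_def by (rule Max_ge[OF finI])
            then show False by simp
          qed
          then have iS: "r < (1+eps)^(Suc i)" unfolding I_def by simp
          define t where "t = (1 + eps) ^ i * eps * dmax V d / 2"
          have "(1+eps)^i \<le> 2/eps" using iI rle e2 by linarith
          then have "t \<in> thresholds V d eps"
            unfolding thresholds_def t_def by blast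
          moreover have "0 \<le> t" unfolding t_def using dpos assms(7) by simp
          moreover have "2*t \<le> ds"
          proof -
            have "2*t = (1+eps)^i * (eps * dmax V d)" unfolding t_def by simp
            also have "\<dots> \<le> r * (eps * dmax V d)" using iI edpos by (intro mult_right_mono) auto
            also have "\<dots> = ds" unfolding r_def using dpos assms(7) by (simp add: field_simps)
            finally show ?thesis .
          qed
          moreover have "ds \<le> 2*t*(1+eps)"
          proof -
            have "ds = r * (eps * dmax V d)" unfolding r_def using dpos assms(7) by (simp add: field_simps)
            also have "\<dots> \<le> (1+eps)^(Suc i) * (eps * dmax V d)" using iS edpos by (intro mult_right_mono) auto
            also have "\<dots> = 2*t*(1+eps)" unfolding t_def by (simp add: algebra_simps)
            finally show ?thesis .
          qed
          ultimately show ?thesis using that by blast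
        qed
        obtain T where T: "gis_out V d g thr k T" "f T \<le> f S" using LP(2) thr(1) by blast
        have sep: "\<forall>x1\<in>O'. \<forall>x2\<in>O'. x1 \<noteq> x2 \<longrightarrow> 2*thr \<le> d x1 x2"
        proof (intro ballI impI)
          fix x1 x2 assume "x1 \<in> O'" "x2 \<in> O'" "x1 \<noteq> x2"
          then have "ds \<le> d x1 x2" unfolding ds_def by (rule divers_le[OF finO])
          then show "2*thr \<le> d x1 x2" using thr(3) by linarith
        qed
        have AT: "A \<le> sum w T" unfolding A_def
          using out_weight[OF T(1)[unfolded g_def] O'(1) finV O'(2) ms thr(2) sep wn] .
        obtain j where reach: "gis_reach V d g thr k j T"
          using T(1) unfolding gis_out_def by blast
        have finT: "finite T" using reach_basic[OF reach] by blast
        have "thr \<le> divers V d T"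
          by (rule divers_ge[OF finT reach_sep[OF reach ms]]) (use thr(2,3) dsle in linarith)
        then have "lam * thr \<le> lam * divers V d T" by (rule mult_left_mono[OF _ lam0])
        then have AfS2: "A + lam*thr \<le> f S" using AT fdef[of T] T(2) by linarith
        have lt0: "0 \<le> lam * thr" using lam0 thr(2) by simp
        have m3: "lam * ds \<le> lam * (2*thr*(1+eps))" by (rule mult_left_mono[OF thr(4) lam0])
        have "lam * (2*thr*(1+eps)) = 2*(lam*thr)*(1+eps)" by (simp add: algebra_simps)
        then have Bx: "lam * ds \<le> 2*(lam*thr)*(1+eps)" using m3 by linarith
        have m4: "lam * ds \<le> lam * dmax V d" by (rule mult_left_mono[OF dsle lam0])
        then have BfS2: "lam * ds \<le> f S" using BfS by linarith
        have B0: "0 \<le> lam * ds" using lam0 ds0 by simp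
        show ?thesis unfolding OPTA
          using arith1[OF A0 B0 lt0 AfS2 BfS2 Bx assms(7) epsle] .
      qed
    qed
  qed
  show ?thesis using part1 goal2 unfolding f_def g_def by blast
qed

end
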